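(* Consider a forward complete system $\dot x(t)=f(x_t,u(t))$ with delay-free output $y(t)=h_0(x(t))$ as in the context. Let $\alpha:\mathcal X^n\to\mathbb R_{\ge0}$ be continuous with $\alpha(0)=0$. Assume there exist $\beta\in\mathcal{KL}$ and $\rho,\kappa,\gamma\in\mathcal N$ such that for all $\xi\in\mathcal X^n$, $u\in\mathcal M$ and all $t\ge0$, $|y(t)|\le\max\{\beta(\alpha(\xi),\ t/(1+\rho(\|\xi\|_{\mathcal X}))),\ \kappa(\max_{\tau\in[-\theta,t]}|y(\tau)|),\ \gamma(\|u\|)\}$. Then there exists $\beta_1\in\mathcal{KL}$ such that for all $\xi,u$ and all $t\ge0$, $\|y_t\|_{\mathcal X}\le\max\{\beta_1(\tilde\alpha(\xi),\ t/(1+\rho(\|\xi\|_{\mathcal X}))),\ \kappa(\max_{\tau\in[0,t]}\|y_\tau\|_{\mathcal X}),\ \gamma(\|u\|)\}$, where $\tilde\alpha(\xi)=\max\{\alpha(\xi),H(\xi)\}$.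
   Context: Fix $\theta>0$; $\mathcal X^k=C([-\theta,0],\mathbb R^k)$ with norm $\|\xi\|_{\mathcal X}=\max_{s\in[-\theta,0]}|\xi(s)|$; for a continuous $v$ on $[-\theta,b]$, $v_t(s)=v(t+s)$. $\mathcal M$: measurable locally essentially bounded $u:\mathbb R_{\ge0}\to\mathbb R^m$, $\|u\|$ the essential supremum on $[0,\infty)$. Classes: $\mathcal N$ = continuous nondecreasing $\sigma:\mathbb R_{\ge0}\to\mathbb R_{\ge0}$, $\sigma(0)=0$; $\mathcal K$ = strictly increasing ones; $\mathcal{KL}$ = $\beta(s,t)$ of class $\mathcal K$ in $s$ and decreasing to $0$ as $t\to\infty$. $f:\mathcal X^n\times\mathbb R^m\to\mathbb R^n$ is locally Lipschitz and maps bounded sets to bounded sets; $x(\cdot,\xi,u)$ is the unique maximal solution with $x(s)=\xi(s)$ on $[-\theta,0]$; forward complete means these exist for all $t\ge0$. $h_0:\mathbb R^n\to\mathbb R^p$ is continuous with $h_0(0)=0$, and along a solution $y(\tau)=h_0(x(\tau,\xi,u))$ for $\tau\ge-\theta$ (so $y(\tau)=h_0(\xi(\tau))$ on $[-\theta,0]$); $y_t\in\mathcal X^p$ is $y_t(s)=y(t+s)$. $H(\xi)=\max_{s\in[-\theta,0]}|h_0(\xi(s))|=\|y_0\|_{\mathcal X}$. *)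

theory Defs
  imports "HOL-Analysis.Analysis" "HOL-Probability.Essential_Supremum"
begin

text \<open>Elements of C([-theta,0], R^k) are represented canonically as functions
  real => 'a that are continuous on [-theta,0] and vanish outside [-theta,0].\<close>
definition Xsp :: "real \<Rightarrow> (real \<Rightarrow> 'a::euclidean_space) set" where
  "Xsp \<theta> = {\<xi>. continuous_on {-\<theta>..0} \<xi> \<and> (\<forall>s. s \<notin> {-\<theta>..0} \<longrightarrow> \<xi> s = 0)}"

definition xnorm :: "real \<Rightarrow> (real \<Rightarrow> 'a::euclidean_space) \<Rightarrow> real" where
  "xnorm \<theta> \<xi> = Sup ((\<lambda>s. norm (\<xi> s)) ` {-\<theta>..0})"

definition seg :: "real \<Rightarrow> (real \<Rightarrow> 'a::euclidean_space) \<Rightarrow> real \<Rightarrow> (real \<Rightarrow> 'a)" where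
  "seg \<theta> v t = (\<lambda>s. if s \<in> {-\<theta>..0} then v (t + s) else 0)"

definition Mset :: "(real \<Rightarrow> 'b::euclidean_space) set" where
  "Mset = {u. set_borel_measurable lborel {0..} u \<and>
       (\<forall>T\<ge>0. \<exists>C. AE t in lborel. t \<in> {0..T} \<longrightarrow> norm (u t) \<le> C)}"

definition ess_norm :: "(real \<Rightarrow> 'b::euclidean_space) \<Rightarrow> ereal" where
  "ess_norm u = esssup (restrict_space lborel {0..}) (\<lambda>t. ereal (norm (u t)))"

definition classN :: "(real \<Rightarrow> real) \<Rightarrow> bool" where
  "classN \<sigma> \<longleftrightarrow> continuous_on {0..} \<sigma> \<and> mono_on {0..} \<sigma> \<and> \<sigma> 0 = 0 \<and> (\<forall>s\<ge>0. \<sigma> s \<ge> 0)"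

definition classK :: "(real \<Rightarrow> real) \<Rightarrow> bool" where
  "classK \<sigma> \<longleftrightarrow> classN \<sigma> \<and> strict_mono_on {0..} \<sigma>"

definition classKL :: "(real \<Rightarrow> real \<Rightarrow> real) \<Rightarrow> bool" where
  "classKL \<beta> \<longleftrightarrow> (\<forall>t\<ge>0. classK (\<lambda>s. \<beta> s t)) \<and>
     (\<forall>s\<ge>0. antimono_on {0..} (\<lambda>t. \<beta> s t) \<and> ((\<lambda>t. \<beta> s t) \<longlongrightarrow> 0) at_top)"

definition loc_lipschitz_X :: "real \<Rightarrow> ((real \<Rightarrow> 'a::euclidean_space) \<Rightarrow> 'b::euclidean_space \<Rightarrow> 'a) \<Rightarrow> bool" where
  "loc_lipschitz_X \<theta> f \<longleftrightarrow> (\<forall>\<xi>\<in>Xsp \<theta>. \<forall>v. \<exists>r>0. \<exists>L. \<forall>\<xi>1\<in>Xsp \<theta>. \<forall>\<xi>2\<in>Xsp \<theta>. \<forall>v1 v2.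
      xnorm \<theta> (\<xi>1 - \<xi>) \<le> r \<and> xnorm \<theta> (\<xi>2 - \<xi>) \<le> r \<and> norm (v1 - v) \<le> r \<and> norm (v2 - v) \<le> r \<longrightarrow>
      norm (f \<xi>1 v1 - f \<xi>2 v2) \<le> L * (xnorm \<theta> (\<xi>1 - \<xi>2) + norm (v1 - v2)))"

definition bounded_on_bounded_X :: "real \<Rightarrow> ((real \<Rightarrow> 'a::euclidean_space) \<Rightarrow> 'b::euclidean_space \<Rightarrow> 'a) \<Rightarrow> bool" where
  "bounded_on_bounded_X \<theta> f \<longleftrightarrow> (\<forall>R. \<exists>C. \<forall>\<xi>\<in>Xsp \<theta>. \<forall>v. xnorm \<theta> \<xi> \<le> R \<and> norm v \<le> R \<longrightarrow> norm (f \<xi> v) \<le> C)"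

definition is_solution :: "real \<Rightarrow> ((real \<Rightarrow> 'a::euclidean_space) \<Rightarrow> 'b::euclidean_space \<Rightarrow> 'a) \<Rightarrow>
    (real \<Rightarrow> 'a) \<Rightarrow> (real \<Rightarrow> 'b) \<Rightarrow> (real \<Rightarrow> 'a) \<Rightarrow> bool" where
  "is_solution \<theta> f \<xi> u z \<longleftrightarrow> (\<forall>s\<in>{-\<theta>..0}. z s = \<xi> s) \<and> continuous_on {-\<theta>..} z \<and>
     (\<forall>t\<ge>0. ((\<lambda>\<tau>. f (seg \<theta> z \<tau>) (u \<tau>)) has_integral (z t - \<xi> 0)) {0..t})"

definition continuous_X :: "real \<Rightarrow> ((real \<Rightarrow> 'a::euclidean_space) \<Rightarrow> real) \<Rightarrow> bool" where
  "continuous_X \<theta> \<alpha> \<longleftrightarrow> (\<forall>\<xi>\<in>Xsp \<theta>. \<forall>\<epsilon>>0. \<exists>\<delta>>0. \<forall>\<eta>\<in>Xsp \<theta>.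
       xnorm \<theta> (\<eta> - \<xi>) < \<delta> \<longrightarrow> \<bar>\<alpha> \<eta> - \<alpha> \<xi>\<bar> < \<epsilon>)"

end

theory Submission
  imports Defs "HOL-Real_Asymp.Real_Asymp" begin

lemma beta1_KL:
  fixes \<theta> :: real and \<beta> :: "real \<Rightarrow> real \<Rightarrow> real"
  assumes th: "\<theta> > 0" and beta: "classKL \<beta>"
  shows "classKL (\<lambda>r \<tau>. \<beta> r (max 0 (\<tau> - \<theta>)) + r * (2*\<theta>/(\<theta>+\<tau>)))"
  unfolding classKL_def
proof (intro conjI allI impI)
  fix t :: real assume t: "t \<ge> 0"
  have K: "classK (\<lambda>s. \<beta> s (max 0 (t - \<theta>)))" using beta unfolding classKL_def by simp
  have c: "2*\<theta>/(\<theta>+t) > 0" using th t by simp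
  show "classK (\<lambda>s. \<beta> s (max 0 (t - \<theta>)) + s * (2*\<theta>/(\<theta>+t)))"
    using K c unfolding classK_def classN_def
  proof (intro conjI)
    show "continuous_on {0..} (\<lambda>s. \<beta> s (max 0 (t - \<theta>)) + s * (2*\<theta>/(\<theta>+t)))"
      using K unfolding classK_def classN_def by (intro continuous_intros) auto
    show "mono_on {0..} (\<lambda>s. \<beta> s (max 0 (t - \<theta>)) + s * (2*\<theta>/(\<theta>+t)))"
      using K c unfolding classK_def classN_def mono_on_def
      by (smt (verit, ccfv_SIG) mult_right_mono)
    show "strict_mono_on {0..} (\<lambda>s. \<beta> s (max 0 (t - \<theta>)) + s * (2*\<theta>/(\<theta>+t)))"
      using K c unfolding classK_def classN_def strict_mono_on_def
      by (smt (verit, ccfv_SIG) mult_strict_right_mono)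
    show "\<beta> 0 (max 0 (t - \<theta>)) + 0 * (2*\<theta>/(\<theta>+t)) = 0"
      using K unfolding classK_def classN_def by simp
    show "\<forall>s\<ge>0. 0 \<le> \<beta> s (max 0 (t - \<theta>)) + s * (2*\<theta>/(\<theta>+t))"
      using K c unfolding classK_def classN_def by (smt (verit) mult_nonneg_nonneg)
  qed
next
  fix s :: real assume s: "s \<ge> 0"
  have am: "antimono_on {0..} (\<lambda>t. \<beta> s t)" and lim: "((\<lambda>t. \<beta> s t) \<longlongrightarrow> 0) at_top"
    using beta s unfolding classKL_def by auto
  show "antimono_on {0..} (\<lambda>t. \<beta> s (max 0 (t - \<theta>)) + s * (2*\<theta>/(\<theta>+t)))"
    unfolding monotone_on_def
  proof (intro allI impI ballI)
    fix a b :: real assume a: "a \<in> {0..}" and b: "b \<in> {0..}" and ab: "a \<le> b"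
    have 1: "\<beta> s (max 0 (b - \<theta>)) \<le> \<beta> s (max 0 (a - \<theta>))"
      using am ab unfolding monotone_on_def by auto
    have 2: "2*\<theta>/(\<theta>+b) \<le> 2*\<theta>/(\<theta>+a)"
      using th a b ab by (intro divide_left_mono) auto
    have 3: "s * (2*\<theta>/(\<theta>+b)) \<le> s * (2*\<theta>/(\<theta>+a))"
      using 2 s by (rule mult_left_mono)
    show "\<beta> s (max 0 (b - \<theta>)) + s * (2*\<theta>/(\<theta>+b)) \<le> \<beta> s (max 0 (a - \<theta>)) + s * (2*\<theta>/(\<theta>+a))"
      using 1 3 by simp
  qed
  have f1: "filterlim (\<lambda>t::real. max 0 (t - \<theta>)) at_top at_top" by real_asymp
  have l1: "((\<lambda>t. \<beta> s (max 0 (t - \<theta>))) \<longlongrightarrow> 0) at_top"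
    using filterlim_compose[OF lim f1] by simp
  have l2: "((\<lambda>t::real. s * (2*\<theta>/(\<theta>+t))) \<longlongrightarrow> 0) at_top"
    using th by real_asymp
  show "((\<lambda>t. \<beta> s (max 0 (t - \<theta>)) + s * (2*\<theta>/(\<theta>+t))) \<longlongrightarrow> 0) at_top"
    using tendsto_add[OF l1 l2] by simp
qed

lemma bdd_norm_img:
  fixes g :: "real \<Rightarrow> 'a::real_normed_vector"
  assumes "continuous_on S g" "compact S"
  shows "bdd_above ((\<lambda>s. norm (g s)) ` S)"
proof -
  have "compact (g ` S)" using assms compact_continuous_image by blast
  then have "bounded (g ` S)" by (rule compact_imp_bounded)
  then obtain B where "\<forall>z\<in>g ` S. norm z \<le> B" by (auto simp: bounded_iff)
  then show ?thesis by (auto simp: bdd_above_def)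
qed

lemma norm_le_Sup:
  fixes g :: "real \<Rightarrow> 'a::real_normed_vector"
  assumes "continuous_on S g" "compact S" "s \<in> S"
  shows "norm (g s) \<le> Sup ((\<lambda>s. norm (g s)) ` S)"
  using bdd_norm_img[OF assms(1,2)] assms(3) by (intro cSup_upper) auto


lemma segnorm: "xnorm \<theta> (seg \<theta> y \<tau>) = Sup ((\<lambda>s. norm (y (\<tau>+s))) ` {-\<theta>..0})"
  unfolding xnorm_def seg_def by (intro arg_cong[where f=Sup] image_cong) auto

theorem lemma7p1:
  fixes \<theta> :: real
    and f :: "(real \<Rightarrow> 'a::euclidean_space) \<Rightarrow> 'b::euclidean_space \<Rightarrow> 'a"
    and h0 :: "'a \<Rightarrow> 'c::euclidean_space"
    and x :: "(real \<Rightarrow> 'a) \<Rightarrow> (real \<Rightarrow> 'b) \<Rightarrow> real \<Rightarrow> 'a"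
    and \<alpha> :: "(real \<Rightarrow> 'a) \<Rightarrow> real"
    and \<beta> :: "real \<Rightarrow> real \<Rightarrow> real"
    and \<rho> \<kappa> \<gamma> :: "real \<Rightarrow> real"
  assumes theta_pos: "\<theta> > 0"
    and f_lip: "loc_lipschitz_X \<theta> f"
    and f_bdd: "bounded_on_bounded_X \<theta> f"
    and h0_cont: "continuous_on UNIV h0" and h0_zero: "h0 0 = 0"
    and sol: "\<And>\<xi> u. \<xi> \<in> Xsp \<theta> \<Longrightarrow> u \<in> Mset \<Longrightarrow> is_solution \<theta> f \<xi> u (x \<xi> u)"
    and alpha_cont: "continuous_X \<theta> \<alpha>"
    and alpha_nonneg: "\<And>\<xi>. \<xi> \<in> Xsp \<theta> \<Longrightarrow> \<alpha> \<xi> \<ge> 0"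
    and alpha_zero: "\<alpha> (\<lambda>s. 0) = 0"
    and beta: "classKL \<beta>"
    and rho: "classN \<rho>" and kappa: "classN \<kappa>" and gamma: "classN \<gamma>"
    and est: "\<And>\<xi> u t. \<xi> \<in> Xsp \<theta> \<Longrightarrow> u \<in> Mset \<Longrightarrow> ess_norm u < \<infinity> \<Longrightarrow> t \<ge> 0 \<Longrightarrow>
        norm (h0 (x \<xi> u t)) \<le>
          max (\<beta> (\<alpha> \<xi>) (t / (1 + \<rho> (xnorm \<theta> \<xi>))))
            (max (\<kappa> (Sup ((\<lambda>\<tau>. norm (h0 (x \<xi> u \<tau>))) ` {-\<theta>..t})))
                 (\<gamma> (real_of_ereal (ess_norm u))))"
  shows "\<exists>\<beta>1. classKL \<beta>1 \<and>
    (\<forall>\<xi>\<in>Xsp \<theta>. \<forall>u\<in>Mset. ess_norm u < \<infinity> \<longrightarrow> (\<forall>t\<ge>0.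
        xnorm \<theta> (seg \<theta> (\<lambda>\<tau>. h0 (x \<xi> u \<tau>)) t) \<le>
          max (\<beta>1 (max (\<alpha> \<xi>) (xnorm \<theta> (\<lambda>s. h0 (\<xi> s)))) (t / (1 + \<rho> (xnorm \<theta> \<xi>))))
            (max (\<kappa> (Sup ((\<lambda>\<tau>. xnorm \<theta> (seg \<theta> (\<lambda>r. h0 (x \<xi> u r)) \<tau>)) ` {0..t})))
                 (\<gamma> (real_of_ereal (ess_norm u))))))"
proof -
  define \<beta>1 where "\<beta>1 = (\<lambda>r \<tau>. \<beta> r (max 0 (\<tau> - \<theta>)) + r * (2*\<theta>/(\<theta>+\<tau>)))"
  have KL: "classKL \<beta>1" unfolding \<beta>1_def by (rule beta1_KL[OF theta_pos beta])
  have bK: "\<And>t. t \<ge> 0 \<Longrightarrow> classK (\<lambda>s. \<beta> s t)" using beta unfolding classKL_def by auto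
  have bAM: "\<And>s. s \<ge> 0 \<Longrightarrow> antimono_on {0..} (\<lambda>t. \<beta> s t)" using beta unfolding classKL_def by auto
  show ?thesis
  proof (intro exI[of _ \<beta>1] conjI KL ballI allI impI)
    fix \<xi> :: "real \<Rightarrow> 'a" and u :: "real \<Rightarrow> 'b" and t :: real
    assume xi: "\<xi> \<in> Xsp \<theta>" and uM: "u \<in> Mset" and ue: "ess_norm u < \<infinity>" and t: "(t::real) \<ge> 0"
    define y where "y = (\<lambda>\<tau>. h0 (x \<xi> u \<tau>))"
    have S: "is_solution \<theta> f \<xi> u (x \<xi> u)" using sol xi uM by blast
    have xcont: "continuous_on {-\<theta>..} (x \<xi> u)" using S unfolding is_solution_def by blast
    have xinit: "\<And>s. s \<in> {-\<theta>..0} \<Longrightarrow> x \<xi> u s = \<xi> s" using S unfolding is_solution_def by blast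
    have ycont: "continuous_on {-\<theta>..} y" unfolding y_def
      using continuous_on_compose2[OF h0_cont xcont] by auto
    have xicont: "continuous_on {-\<theta>..0} \<xi>" using xi unfolding Xsp_def by blast
    have hxicont: "continuous_on {-\<theta>..0} (\<lambda>s. h0 (\<xi> s))"
      using continuous_on_compose2[OF h0_cont xicont] by auto
    have ysub: "continuous_on {-\<theta>..t} y" using ycont by (rule continuous_on_subset) auto
    obtain B where B: "\<And>\<tau>. \<tau> \<in> {-\<theta>..t} \<Longrightarrow> norm (y \<tau>) \<le> B"
      using bdd_norm_img[OF ysub compact_Icc] unfolding bdd_above_def by (metis atLeastAtMost_iff image_eqI)
    have gcont: "continuous_on {-\<theta>..0} (\<lambda>s. y (\<tau>+s))" if "\<tau> \<ge> 0" for \<tau>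
    proof -
      have "continuous_on {-\<theta>..0} (\<lambda>s. \<tau>+s)" by (intro continuous_intros)
      moreover have "(\<lambda>s. \<tau>+s) ` {-\<theta>..0} \<subseteq> {-\<theta>..}" using that by auto
      ultimately show ?thesis using continuous_on_compose2[OF ycont] by blast
    qed
    have segle: "norm (y (\<tau>+s)) \<le> xnorm \<theta> (seg \<theta> y \<tau>)" if "\<tau> \<ge> 0" "s \<in> {-\<theta>..0}" for \<tau> s
      unfolding segnorm using norm_le_Sup[OF gcont[OF that(1)] compact_Icc that(2)] .
    have segB: "xnorm \<theta> (seg \<theta> y \<tau>) \<le> B" if "\<tau> \<in> {0..t}" for \<tau>
      unfolding segnorm using theta_pos that by (intro cSup_least) (auto intro!: B)
    define K where "K = Sup ((\<lambda>\<tau>. xnorm \<theta> (seg \<theta> y \<tau>)) ` {0..t})"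
    have leK: "xnorm \<theta> (seg \<theta> y \<tau>) \<le> K" if "\<tau> \<in> {0..t}" for \<tau>
      unfolding K_def using that segB by (intro cSup_upper) (auto simp: bdd_above_def intro!: exI[of _ B])
    define H where "H = xnorm \<theta> (\<lambda>s. h0 (\<xi> s))"
    have Hle: "norm (h0 (\<xi> s)) \<le> H" if "s \<in> {-\<theta>..0}" for s
      unfolding H_def xnorm_def using norm_le_Sup[OF hxicont compact_Icc that] by simp
    have H0: "H \<ge> 0" using Hle[of 0] theta_pos by (smt (verit) atLeastAtMost_iff norm_ge_zero)
    have xin0: "xnorm \<theta> \<xi> \<ge> 0" unfolding xnorm_def
      using norm_le_Sup[OF xicont compact_Icc, of 0] theta_pos by (smt (verit) atLeastAtMost_iff norm_ge_zero)
    define A where "A = max (\<alpha> \<xi>) H"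
    have A0: "A \<ge> 0" using H0 unfolding A_def by simp
    have aA: "\<alpha> \<xi> \<le> A" unfolding A_def by simp
    have a0: "\<alpha> \<xi> \<ge> 0" using alpha_nonneg xi by blast
    define r where "r = 1 + \<rho> (xnorm \<theta> \<xi>)"
    have r1: "r \<ge> 1" unfolding r_def using rho xin0 unfolding classN_def by auto
    define T where "T = t / r"
    have T0: "T \<ge> 0" "T \<le> t" unfolding T_def using r1 t by (auto simp: divide_le_eq mult_le_cancel_left1)
    define G where "G = \<gamma> (real_of_ereal (ess_norm u))"
    have b1nn: "\<beta> A (max 0 (T - \<theta>)) \<ge> 0" using bK[of "max 0 (T - \<theta>)"] A0 unfolding classK_def classN_def by auto
    have pt: "norm (y (t+s)) \<le> max (\<beta>1 A T) (max (\<kappa> K) G)" if s: "s \<in> {-\<theta>..0}" for s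
    proof (cases "t + s < 0")
      case True
      have "t < \<theta>" using True s by auto
      then have "T < \<theta>" using T0 by auto
      then have q: "2*\<theta>/(\<theta>+T) \<ge> 1" using theta_pos T0 by (simp add: field_simps)
      have "norm (y (t+s)) = norm (h0 (\<xi> (t+s)))" unfolding y_def using xinit[of "t+s"] True s t by auto
      also have "\<dots> \<le> H" using Hle[of "t+s"] True s t by auto
      also have "\<dots> \<le> A" unfolding A_def by simp
      also have "\<dots> \<le> A * (2*\<theta>/(\<theta>+T))" using A0 q mult_le_cancel_left1[of A "2*\<theta>/(\<theta>+T)"] by (smt (verit) mult_nonneg_nonneg)
      also have "\<dots> \<le> \<beta>1 A T" unfolding \<beta>1_def using b1nn by simp
      finally show ?thesis by simp
    next
      case False
      have e: "norm (y (t+s)) \<le> max (\<beta> (\<alpha> \<xi>) ((t+s) / r))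
            (max (\<kappa> (Sup ((\<lambda>\<tau>. norm (y \<tau>)) ` {-\<theta>..t+s}))) G)"
        using est[OF xi uM ue, of "t+s"] False unfolding y_def r_def G_def by simp
      have ts: "(t+s)/r \<ge> max 0 (T - \<theta>)"
      proof -
        have "(t+s)/r \<ge> 0" using False r1 by simp
        moreover have "(t+s)/r \<ge> T - \<theta>"
        proof -
          have "(t+s)/r = T + s/r" unfolding T_def by (simp add: add_divide_distrib)
          moreover have "s/r \<ge> -\<theta>" using s r1 theta_pos
            by (simp add: le_divide_eq) (smt (verit) mult_le_cancel_left1)
          ultimately show ?thesis by simp
        qed
        ultimately show ?thesis by simp
      qed
      have bb: "\<beta> (\<alpha> \<xi>) ((t+s) / r) \<le> \<beta>1 A T"
      proof -
        have "\<beta> (\<alpha> \<xi>) ((t+s) / r) \<le> \<beta> (\<alpha> \<xi>) (max 0 (T - \<theta>))"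
          using bAM[OF a0] ts unfolding monotone_on_def by (smt (verit) atLeast_iff)
        also have "\<dots> \<le> \<beta> A (max 0 (T - \<theta>))"
          using bK[of "max 0 (T - \<theta>)"] a0 aA unfolding classK_def classN_def mono_on_def by auto
        also have "\<dots> \<le> \<beta>1 A T" unfolding \<beta>1_def using A0 theta_pos T0
          by (simp add: mult_nonneg_nonneg)
        finally show ?thesis .
      qed
      have Sle: "Sup ((\<lambda>\<tau>. norm (y \<tau>)) ` {-\<theta>..t+s}) \<le> K"
      proof (rule cSup_least)
        show "(\<lambda>\<tau>. norm (y \<tau>)) ` {-\<theta>..t+s} \<noteq> {}" using False s by auto
        fix v assume "v \<in> (\<lambda>\<tau>. norm (y \<tau>)) ` {-\<theta>..t+s}"
        then obtain \<tau> where tau: "\<tau> \<in> {-\<theta>..t+s}" and v: "v = norm (y \<tau>)" by auto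
        show "v \<le> K"
        proof (cases "\<tau> \<le> 0")
          case True
          have "norm (y (0+\<tau>)) \<le> xnorm \<theta> (seg \<theta> y 0)" using segle[of 0 \<tau>] tau True by auto
          also have "\<dots> \<le> K" using leK[of 0] t by auto
          finally show ?thesis using v by simp
        next
          case False
          have "norm (y (\<tau>+0)) \<le> xnorm \<theta> (seg \<theta> y \<tau>)" using segle[of \<tau> 0] theta_pos False by auto
          also have "\<dots> \<le> K" using leK[of \<tau>] tau s False by auto
          finally show ?thesis using v by simp
        qed
      qed
      have S0: "Sup ((\<lambda>\<tau>. norm (y \<tau>)) ` {-\<theta>..t+s}) \<ge> 0"
      proof -
        have "continuous_on {-\<theta>..t+s} y" using ycont by (rule continuous_on_subset) auto
        from norm_le_Sup[OF this compact_Icc, of "t+s"] show ?thesis using False s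
          by (smt (verit) atLeastAtMost_iff norm_ge_zero)
      qed
      have kk: "\<kappa> (Sup ((\<lambda>\<tau>. norm (y \<tau>)) ` {-\<theta>..t+s})) \<le> \<kappa> K"
        using kappa Sle S0 unfolding classN_def mono_on_def by auto
      show ?thesis using e bb kk by linarith
    qed
    have "xnorm \<theta> (seg \<theta> y t) \<le> max (\<beta>1 A T) (max (\<kappa> K) G)"
      unfolding segnorm using theta_pos by (intro cSup_least) (auto intro!: pt)
    then show "xnorm \<theta> (seg \<theta> (\<lambda>\<tau>. h0 (x \<xi> u \<tau>)) t) \<le>
          max (\<beta>1 (max (\<alpha> \<xi>) (xnorm \<theta> (\<lambda>s. h0 (\<xi> s)))) (t / (1 + \<rho> (xnorm \<theta> \<xi>))))
            (max (\<kappa> (Sup ((\<lambda>\<tau>. xnorm \<theta> (seg \<theta> (\<lambda>r. h0 (x \<xi> u r)) \<tau>)) ` {0..t})))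
                 (\<gamma> (real_of_ereal (ess_norm u))))"
      unfolding y_def K_def A_def H_def T_def r_def G_def .
  qed
qed

end
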